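(* Let $\mathcal{G}=(\mathcal{V},\mathcal{E})$ be a strongly connected digraph and let $\{\mathbf{A}(k)\}_{k\in\mathbb{Z}_+}$ be the sequence of weight matrices generated by the distributed quantized weight-balancing algorithm described in the context, with the step-size $\gamma(k)=2^{-n}$ for $2^n-1\le k\le 2^{n+1}-2$, $n\in\mathbb{Z}_+$. Then: (a) (Asymptotic convergence) $\lim_{k\to\infty}\mathbf{A}(k)=\mathbf{A}^\infty$ for some matrix $\mathbf{A}^\infty$ that makes the digraph weight-balanced, i.e. with $\mathbf{A}^\infty$ every node $i$ satisfies $\sum_{j\in\mathcal{N}_i^-}a^\infty_{ij}=\sum_{j\in\mathcal{N}_i^+}a^\infty_{ji}$; (b) (Convergence rate) $\Vert\boldsymbol{\epsilon}(k)\Vert_1=O(1/k)$ as $k\to\infty$.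
   Context: $\mathcal{G}=(\mathcal{V},\mathcal{E})$ is a directed graph with $\mathcal{V}=\{1,\dots,N\}$, no self-loops; $(i,j)\in\mathcal{E}$ denotes an edge from $i$ to $j$. In-neighbors $\mathcal{N}_i^-=\{j:(j,i)\in\mathcal{E}\}$, out-neighbors $\mathcal{N}_i^+=\{j:(i,j)\in\mathcal{E}\}$, out-degree $d_i^+=|\mathcal{N}_i^+|$. Strongly connected means there is a directed path from every node to every other node. A weight matrix $\mathbf{A}=(a_{ij})$ is compliant with $\mathcal{G}$: $a_{ij}\ge 0$ if $(j,i)\in\mathcal{E}$ and $a_{ij}=0$ otherwise. Algorithm: initialize $a_{ij}(0)=1$ if $j\in\mathcal{N}_i^-$ and $a_{ij}(0)=0$ otherwise. At iteration $k$, define the balance $b_i(k)=\sum_{j\in\mathcal{N}_i^-}a_{ij}(k)-\sum_{j\in\mathcal{N}_i^+}a_{ji}(k)$; each node $i$ computes the bit $n_i(k)=1$ if $b_i(k)\ge d_i^+\gamma(k)$ and $n_i(k)=0$ otherwise, and broadcasts it to its out-neighbors; then each node $i$ updates $a_{ij}(k+1)=a_{ij}(k)+n_j(k)\gamma(k)$ for all $j\in\mathcal{N}_i^-$ (other entries stay $0$). The imbalance vector is $\boldsymbol{\epsilon}(k)=(|b_i(k)|)_{i=1}^N$. *)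

theory Defs
  imports "HOL-Analysis.Analysis" "HOL-Library.Landau_Symbols"
begin

text \<open>Vertices are the elements of a finite type 'v; the edge set is E, with (i,j) \<in> E
  meaning an edge from i to j.  A weight matrix is a function M :: 'v \<Rightarrow> 'v \<Rightarrow> real,
  M i j = a_ij.\<close>

definition in_nbrs :: "('v \<times> 'v) set \<Rightarrow> 'v \<Rightarrow> 'v set" where
  "in_nbrs E i = {j. (j, i) \<in> E}"

definition out_nbrs :: "('v \<times> 'v) set \<Rightarrow> 'v \<Rightarrow> 'v set" where
  "out_nbrs E i = {j. (i, j) \<in> E}"

definition out_deg :: "('v \<times> 'v) set \<Rightarrow> 'v \<Rightarrow> nat" where
  "out_deg E i = card (out_nbrs E i)"

definition strongly_connected :: "('v \<times> 'v) set \<Rightarrow> bool" where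
  "strongly_connected E \<longleftrightarrow> (\<forall>i j. i \<noteq> j \<longrightarrow> (i, j) \<in> E\<^sup>+)"

definition no_self_loops :: "('v \<times> 'v) set \<Rightarrow> bool" where
  "no_self_loops E \<longleftrightarrow> (\<forall>i. (i, i) \<notin> E)"

definition balance :: "('v \<times> 'v) set \<Rightarrow> ('v \<Rightarrow> 'v \<Rightarrow> real) \<Rightarrow> 'v \<Rightarrow> real" where
  "balance E M i = (\<Sum>j\<in>in_nbrs E i. M i j) - (\<Sum>j\<in>out_nbrs E i. M j i)"

definition weight_balanced :: "('v \<times> 'v) set \<Rightarrow> ('v \<Rightarrow> 'v \<Rightarrow> real) \<Rightarrow> bool" where
  "weight_balanced E M \<longleftrightarrow> (\<forall>i. (\<Sum>j\<in>in_nbrs E i. M i j) = (\<Sum>j\<in>out_nbrs E i. M j i))"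

definition step_size :: "nat \<Rightarrow> real" where
  "step_size k = 1 / 2 ^ (THE n::nat. 2 ^ n - 1 \<le> k \<and> k \<le> 2 ^ (n + 1) - 2)"

definition bit :: "('v \<times> 'v) set \<Rightarrow> ('v \<Rightarrow> 'v \<Rightarrow> real) \<Rightarrow> real \<Rightarrow> 'v \<Rightarrow> real" where
  "bit E M g i = (if balance E M i \<ge> real (out_deg E i) * g then 1 else 0)"

primrec alg :: "('v \<times> 'v) set \<Rightarrow> nat \<Rightarrow> 'v \<Rightarrow> 'v \<Rightarrow> real" where
  "alg E 0 = (\<lambda>i j. if j \<in> in_nbrs E i then 1 else 0)"
| "alg E (Suc k) = (\<lambda>i j. if j \<in> in_nbrs E i
        then alg E k i j + bit E (alg E k) (step_size k) j * step_size k
        else 0)"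

definition imbalance_norm1 :: "('v::finite \<times> 'v) set \<Rightarrow> nat \<Rightarrow> real" where
  "imbalance_norm1 E k = (\<Sum>i\<in>UNIV. \<bar>balance E (alg E k) i\<bar>)"

end

theory Submission
  imports Defs
begin


primrec xs :: "('v \<times> 'v) set \<Rightarrow> nat \<Rightarrow> 'v \<Rightarrow> real" where
  "xs E 0 = (\<lambda>j. 1)"
| "xs E (Suc k) = (\<lambda>j. xs E k j + bit E (alg E k) (step_size k) j * step_size k)"

lemma alg_eq: "alg E k i j = (if j \<in> in_nbrs E i then xs E k j else 0)"
  by (induction k) auto

definition bal :: "('v \<times> 'v) set \<Rightarrow> ('v \<Rightarrow> real) \<Rightarrow> 'v \<Rightarrow> real" where
  "bal E z i = (\<Sum>j\<in>in_nbrs E i. z j) - real (out_deg E i) * z i"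

lemma balance_form:
  fixes E :: "('v::finite \<times> 'v) set"
  assumes "\<And>i j. M i j = (if j \<in> in_nbrs E i then z j else 0)"
  shows "balance E M i = bal E z i"
proof -
  have "(\<Sum>j\<in>in_nbrs E i. M i j) = (\<Sum>j\<in>in_nbrs E i. z j)"
    by (rule sum.cong) (auto simp: assms)
  moreover have "(\<Sum>j\<in>out_nbrs E i. M j i) = (\<Sum>j\<in>out_nbrs E i. z i)"
    by (rule sum.cong) (auto simp: assms in_nbrs_def out_nbrs_def)
  ultimately show ?thesis unfolding balance_def bal_def out_deg_def by simp
qed

lemma balance_alg:
  fixes E :: "('v::finite \<times> 'v) set"
  shows "balance E (alg E k) i = bal E (xs E k) i"
  by (rule balance_form) (rule alg_eq)

lemma xs_Suc:
  fixes E :: "('v::finite \<times> 'v) set"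
  shows "xs E (Suc k) j = xs E k j + (if bal E (xs E k) j \<ge> real (out_deg E j) * step_size k then step_size k else 0)"
  by (simp add: bit_def balance_alg)

lemma step_size_phase:
  assumes "2 ^ m - 1 \<le> k" "k < 2 ^ Suc m - 1"
  shows "step_size k = 1 / 2 ^ m"
proof -
  have "(THE n::nat. 2 ^ n - 1 \<le> k \<and> k \<le> 2 ^ (n + 1) - 2) = m"
  proof (rule the_equality)
    show "2 ^ m - 1 \<le> k \<and> k \<le> 2 ^ (m + 1) - 2" using assms by auto
  next
    fix n assume n: "2 ^ n - 1 \<le> k \<and> k \<le> 2 ^ (n + 1) - 2"
    show "n = m"
    proof (rule ccontr)
      assume "n \<noteq> m"
      then consider "n < m" | "m < n" by linarith
      then show False
      proof cases
        case 1
        then have "(2::nat) ^ Suc n \<le> 2 ^ m" by (intro power_increasing) auto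
        moreover have "(2::nat) ^ Suc n \<ge> 2" by (metis one_le_power power_Suc mult_le_mono2 mult.right_neutral one_le_numeral)
        ultimately show ?thesis using n assms by (simp only: Suc_eq_plus1) arith
      next
        case 2
        then have "(2::nat) ^ Suc m \<le> 2 ^ n" by (intro power_increasing) auto
        moreover have "(2::nat) ^ Suc m \<ge> 2" by (metis one_le_power power_Suc mult_le_mono2 mult.right_neutral one_le_numeral)
        ultimately show ?thesis using n assms by (simp only: Suc_eq_plus1) arith
      qed
    qed
  qed
  then show ?thesis unfolding step_size_def by simp
qed

lemma phase_exists: "\<exists>m. 2 ^ m - 1 \<le> k \<and> k < 2 ^ Suc m - (1::nat)"
proof -
  obtain m where "2 ^ m \<le> k + 1" "k + 1 < 2 ^ (m + 1)"
    using ex_power_ivl1[of 2 "k+1"] by auto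
  then show ?thesis by (intro exI[of _ m]) auto
qed

lemma step_size_pos: "step_size k > 0"
  unfolding step_size_def by simp



locale wb =
  fixes E :: "('v::finite \<times> 'v) set"
  assumes nsl: "no_self_loops E" and sc: "strongly_connected E" and ne: "E \<noteq> {}"
begin

abbreviation dd :: "'v \<Rightarrow> real" where "dd i \<equiv> real (out_deg E i)"

lemma in_out: "j \<in> in_nbrs E i \<longleftrightarrow> (j, i) \<in> E" "j \<in> out_nbrs E i \<longleftrightarrow> (i, j) \<in> E"
  by (auto simp: in_nbrs_def out_nbrs_def)

lemma dd_pos: "dd i > 0"
proof -
  obtain a b where ab: "(a, b) \<in> E" using ne by auto
  then have "a \<noteq> b" using nsl unfolding no_self_loops_def by auto
  obtain j where "j \<noteq> i" using \<open>a \<noteq> b\<close> by metis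
  then have "(i, j) \<in> E\<^sup>+" using sc unfolding strongly_connected_def by auto
  then obtain z where "(i, z) \<in> E" by (meson converse_tranclE)
  then have "z \<in> out_nbrs E i" by (simp add: in_out)
  then have "card (out_nbrs E i) > 0" by (metis card_gt_0_iff empty_iff finite)
  then show ?thesis unfolding out_deg_def by simp
qed

definition cc :: "'v \<Rightarrow> 'v \<Rightarrow> real" where
  "cc i j = (if (j, i) \<in> E then 1 / dd j else 0)"

lemma cc_nonneg: "cc i j \<ge> 0" unfolding cc_def by auto

lemma cc_colsum: "(\<Sum>i\<in>UNIV. cc i j) = 1"
proof -
  have "(\<Sum>i\<in>UNIV. cc i j) = (\<Sum>i\<in>out_nbrs E j. 1 / dd j)"
    unfolding cc_def by (subst sum.If_cases) (auto simp: in_out out_nbrs_def intro!: sum.cong)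
  also have "\<dots> = 1"
  proof -
    have "card (out_nbrs E j) > 0" using dd_pos[of j] by (simp add: out_deg_def)
    then show ?thesis by (auto simp: out_deg_def)
  qed
  finally show ?thesis .
qed

lemma cc_sum_in: "(\<Sum>j\<in>UNIV. cc i j * z j) = (\<Sum>j\<in>in_nbrs E i. z j / dd j)"
proof -
  have "(\<Sum>j\<in>in_nbrs E i. z j / dd j) = (\<Sum>j\<in>UNIV. if (j, i) \<in> E then z j / dd j else 0)"
    unfolding in_nbrs_def using sum.inter_filter[of UNIV "\<lambda>j. z j / dd j" "\<lambda>j. (j, i) \<in> E"] by simp
  then show ?thesis unfolding cc_def by (auto intro!: sum.cong)
qed

lemma exists_v: "\<exists>v::'v \<Rightarrow> real. (\<forall>i. v i > 0) \<and> (\<forall>i. (\<Sum>j\<in>in_nbrs E i. v j) = dd i * v i)"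
proof -
  define S :: "(real^'v) set" where "S = {y. (\<forall>i. 0 \<le> y$i) \<and> (\<Sum>i\<in>UNIV. y$i) = 1}"
  define F :: "real^'v \<Rightarrow> real^'v" where "F y = (\<chi> i. \<Sum>j\<in>UNIV. cc i j * y$j)" for y
  have "S = {x::real^'v. \<forall>i. 0 \<le> x$i} \<inter> {y. (\<Sum>i\<in>UNIV. y$i) = 1}"
    unfolding S_def by auto
  moreover have "closed {y::real^'v. (\<Sum>i\<in>UNIV. y$i) = 1}"
    by (rule closed_Collect_eq) (rule continuous_on_sum, rule continuous_on_component, rule continuous_on_id, rule continuous_on_const)
  ultimately have closed: "closed S" using closed_positive_orthant closed_Int by metis
  have bounded: "bounded S" unfolding bounded_iff
  proof (intro exI ballI)
    fix y assume "y \<in> S"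
    then have "norm y \<le> (\<Sum>i\<in>UNIV. \<bar>y$i\<bar>)" using norm_le_l1_cart by blast
    also have "\<dots> = 1" using \<open>y \<in> S\<close> unfolding S_def by auto
    finally show "norm y \<le> 1" .
  qed
  have convex: "convex S" unfolding convex_def
  proof (intro ballI allI impI)
    fix x y :: "real^'v" and u w :: real
    assume xy: "x \<in> S" "y \<in> S" and uw: "0 \<le> u" "0 \<le> w" "u + w = 1"
    have "(\<Sum>i\<in>UNIV. (u *\<^sub>R x + w *\<^sub>R y)$i) = u * (\<Sum>i\<in>UNIV. x$i) + w * (\<Sum>i\<in>UNIV. y$i)"
      by (simp add: sum.distrib sum_distrib_left)
    also have "\<dots> = 1" using xy uw unfolding S_def by simp
    finally show "u *\<^sub>R x + w *\<^sub>R y \<in> S" using xy uw unfolding S_def by simp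
  qed
  have nonempty: "S \<noteq> {}"
  proof -
    have "(\<chi> i. 1 / real CARD('v)) \<in> S" unfolding S_def by auto
    then show ?thesis by auto
  qed
  have cont: "continuous_on S F" unfolding F_def
    by (rule continuous_on_vec_lambda, rule continuous_on_sum, rule continuous_on_mult_left, rule continuous_on_component, rule continuous_on_id)
  have into: "F \<in> S \<rightarrow> S"
  proof
    fix y assume y: "y \<in> S"
    have "(\<Sum>i\<in>UNIV. F y $ i) = (\<Sum>i\<in>UNIV. \<Sum>j\<in>UNIV. cc i j * y$j)"
      unfolding F_def by simp
    also have "\<dots> = (\<Sum>j\<in>UNIV. \<Sum>i\<in>UNIV. cc i j * y$j)" by (rule sum.swap)
    also have "\<dots> = (\<Sum>j\<in>UNIV. (\<Sum>i\<in>UNIV. cc i j) * y$j)" by (simp only: sum_distrib_right)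
    also have "\<dots> = 1" using y by (simp add: cc_colsum S_def)
    finally show "F y \<in> S" using y unfolding S_def F_def
      by (auto intro!: sum_nonneg mult_nonneg_nonneg cc_nonneg)
  qed
  obtain y where yS: "y \<in> S" and yF: "F y = y"
    using brouwer[OF compact_eq_bounded_closed[THEN iffD2, OF conjI[OF bounded closed]] convex nonempty cont into] by blast
  have yfix: "y$i = (\<Sum>j\<in>UNIV. cc i j * y$j)" for i
    using yF unfolding F_def by (metis vec_lambda_beta)
  have ynn: "y$i \<ge> 0" for i using yS unfolding S_def by auto
  have "\<exists>a. y$a > 0"
  proof (rule ccontr)
    assume "\<not> (\<exists>a. y$a > 0)"
    then have "\<forall>i. y$i \<le> 0" by (meson not_less)
    then have "(\<Sum>i\<in>UNIV. y$i) \<le> 0" by (simp add: sum_nonpos)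
    then show False using yS unfolding S_def by auto
  qed
  then obtain a where a: "y$a > 0" by blast
  have ystep: "y$q > 0" if "(p, q) \<in> E" "y$p > 0" for p q
  proof -
    have "cc q p * y$p \<le> (\<Sum>j\<in>UNIV. cc q j * y$j)"
      by (rule member_le_sum) (auto intro: mult_nonneg_nonneg cc_nonneg ynn)
    moreover have "cc q p * y$p > 0" using that dd_pos[of p] by (simp add: cc_def)
    ultimately show ?thesis by (simp only: yfix[of q, symmetric])
  qed
  have ypos: "y$i > 0" for i
  proof (cases "i = a")
    case True then show ?thesis using a by simp
  next
    case False
    then have "(a, i) \<in> E\<^sup>+" using sc unfolding strongly_connected_def by auto
    then show ?thesis
    proof (induction rule: trancl_induct)
      case (base q) then show ?case using ystep[OF _ a] by blast
    next
      case (step p q) then show ?case using ystep[of p q] by blast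
    qed
  qed
  define v where "v i = y$i / dd i" for i
  show ?thesis
  proof (intro exI conjI allI)
    fix i
    show "v i > 0" using ypos[of i] dd_pos[of i] by (simp add: v_def)
    have "(\<Sum>j\<in>in_nbrs E i. v j) = (\<Sum>j\<in>UNIV. cc i j * y$j)"
      by (simp add: cc_sum_in v_def)
    also have "\<dots> = y$i" by (rule yfix[symmetric])
    also have "\<dots> = dd i * v i" using dd_pos[of i] by (simp add: v_def)
    finally show "(\<Sum>j\<in>in_nbrs E i. v j) = dd i * v i" .
  qed
qed

end


declare xs.simps(2)[simp del]

context wb begin

definition v :: "'v \<Rightarrow> real" where
  "v = (SOME v. (\<forall>i. v i > 0) \<and> (\<forall>i. (\<Sum>j\<in>in_nbrs E i. v j) = dd i * v i))"

lemma v_prop: "(\<forall>i. v i > 0) \<and> (\<forall>i. (\<Sum>j\<in>in_nbrs E i. v j) = dd i * v i)"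
  unfolding v_def using someI_ex[OF exists_v] by blast

lemma v_pos: "v i > 0" using v_prop by blast
lemma v_eq: "(\<Sum>j\<in>in_nbrs E i. v j) = dd i * v i" using v_prop by blast

abbreviation x :: "nat \<Rightarrow> 'v \<Rightarrow> real" where "x \<equiv> xs E"
abbreviation \<gamma> :: "nat \<Rightarrow> real" where "\<gamma> \<equiv> step_size"

definition Rmax :: "nat \<Rightarrow> real" where "Rmax k = Max (range (\<lambda>i. x k i / v i))"
definition Rmin :: "nat \<Rightarrow> real" where "Rmin k = Min (range (\<lambda>i. x k i / v i))"

lemma Rmax_ge: "x k i \<le> Rmax k * v i"
proof -
  have "x k i / v i \<le> Rmax k" unfolding Rmax_def by (rule Max_ge) auto
  then show ?thesis using v_pos[of i] by (simp add: pos_divide_le_eq)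
qed

lemma Rmin_le: "Rmin k * v i \<le> x k i"
proof -
  have "Rmin k \<le> x k i / v i" unfolding Rmin_def by (rule Min_le) auto
  then show ?thesis using v_pos[of i] by (simp add: pos_le_divide_eq)
qed

lemma Rmax_least: assumes "\<And>i. x k i \<le> c * v i" shows "Rmax k \<le> c"
  unfolding Rmax_def
proof (subst Max_le_iff, simp, simp, intro ballI)
  fix a assume "a \<in> range (\<lambda>i. x k i / v i)"
  then obtain i where "a = x k i / v i" by auto
  then show "a \<le> c" using assms[of i] v_pos[of i] by (simp add: pos_divide_le_eq)
qed

lemma Rmin_greatest: assumes "\<And>i. c * v i \<le> x k i" shows "c \<le> Rmin k"
  unfolding Rmin_def
proof (subst Min_ge_iff, simp, simp, intro ballI)
  fix a assume "a \<in> range (\<lambda>i. x k i / v i)"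
  then obtain i where "a = x k i / v i" by auto
  then show "c \<le> a" using assms[of i] v_pos[of i] by (simp add: pos_le_divide_eq)
qed

lemma Rmin_attained: "\<exists>m. x k m = Rmin k * v m"
proof -
  have "Rmin k \<in> range (\<lambda>i. x k i / v i)" unfolding Rmin_def by (rule Min_in) auto
  then obtain m where "Rmin k = x k m / v m" by auto
  then show ?thesis using v_pos[of m] by (intro exI[of _ m]) simp
qed

lemma Rmax_attained: "\<exists>m. x k m = Rmax k * v m"
proof -
  have "Rmax k \<in> range (\<lambda>i. x k i / v i)" unfolding Rmax_def by (rule Max_in) auto
  then obtain m where "Rmax k = x k m / v m" by auto
  then show ?thesis using v_pos[of m] by (intro exI[of _ m]) simp
qed

lemma x_Suc_ge: "x k i \<le> x (Suc k) i"
  using step_size_pos[of k] by (simp add: xs_Suc)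

lemma x_mono: "k \<le> k' \<Longrightarrow> x k i \<le> x k' i"
  by (rule lift_Suc_mono_le[of "\<lambda>k. x k i"]) (auto intro: x_Suc_ge)

lemma x_Suc_le_Rmax: "x (Suc k) i \<le> Rmax k * v i"
proof (cases "bal E (x k) i \<ge> dd i * \<gamma> k")
  case True
  have "(\<Sum>j\<in>in_nbrs E i. x k j) \<le> (\<Sum>j\<in>in_nbrs E i. Rmax k * v j)"
    by (rule sum_mono) (rule Rmax_ge)
  also have "\<dots> = Rmax k * (dd i * v i)" by (simp add: sum_distrib_left[symmetric] v_eq)
  finally have "dd i * (x k i + \<gamma> k) \<le> dd i * (Rmax k * v i)"
    using True unfolding bal_def by (simp add: algebra_simps)
  then have "x k i + \<gamma> k \<le> Rmax k * v i" using dd_pos[of i] by simp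
  then show ?thesis using True by (simp add: xs_Suc)
next
  case False
  then show ?thesis using Rmax_ge[of k i] by (simp add: xs_Suc)
qed

lemma Rmax_Suc: "Rmax (Suc k) \<le> Rmax k"
  by (rule Rmax_least) (rule x_Suc_le_Rmax)

lemma Rmax_mono: "k \<le> k' \<Longrightarrow> Rmax k' \<le> Rmax k"
  by (rule lift_Suc_antimono_le[of Rmax]) (auto intro: Rmax_Suc)

lemma Rmin_Suc: "Rmin k \<le> Rmin (Suc k)"
  by (rule Rmin_greatest) (meson Rmin_le x_Suc_ge order_trans)

lemma Rmin_mono: "k \<le> k' \<Longrightarrow> Rmin k \<le> Rmin k'"
  by (rule lift_Suc_mono_le[of Rmin]) (auto intro: Rmin_Suc)

lemma x_bound: "x k i \<le> Rmax 0 * v i"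
  using Rmax_ge[of k i] Rmax_mono[of 0 k] v_pos[of i] by (meson le0 mult_right_mono less_imp_le order_trans)

lemma x_ge1: "x k i \<ge> 1"
  using x_mono[of 0 k i] by simp

definition P :: "nat \<Rightarrow> real" where "P k = (\<Sum>i\<in>UNIV. x k i)"
definition Vs :: real where "Vs = (\<Sum>i\<in>UNIV. v i)"

lemma P_bound: "P k \<le> Rmax 0 * Vs"
  unfolding P_def Vs_def sum_distrib_left by (rule sum_mono) (rule x_bound)

lemma P_nonneg: "P k \<ge> 0"
  unfolding P_def by (rule sum_nonneg) (meson x_ge1 order_trans zero_le_one)

definition stab :: "('v \<Rightarrow> real) \<Rightarrow> real \<Rightarrow> bool" where
  "stab z g \<longleftrightarrow> (\<forall>i. bal E z i < dd i * g)"

lemma stab_nofire: "stab (x k) (\<gamma> k) \<Longrightarrow> x (Suc k) = x k"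
  unfolding stab_def by (rule ext) (simp add: xs_Suc, meson not_le)

lemma unstab_grow: assumes "\<not> stab (x k) (\<gamma> k)" shows "P (Suc k) \<ge> P k + \<gamma> k"
proof -
  obtain i where i: "bal E (x k) i \<ge> dd i * \<gamma> k" using assms unfolding stab_def by (auto simp: not_less)
  have "x (Suc k) i - x k i \<le> (\<Sum>j\<in>UNIV. x (Suc k) j - x k j)"
    by (rule member_le_sum) (auto simp: x_Suc_ge)
  moreover have "x (Suc k) i - x k i = \<gamma> k" using i by (simp add: xs_Suc)
  ultimately show ?thesis unfolding P_def by (simp add: sum_subtractf)
qed

end


context wb begin

definition ks :: "nat \<Rightarrow> nat" where "ks m = 2 ^ m - 1"

lemma ks_Suc: "ks (Suc m) = ks m + 2 ^ m"
proof -
  have "(1::nat) \<le> 2 ^ m" by simp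
  then show ?thesis unfolding ks_def by simp
qed

lemma ks_mono: "a \<le> b \<Longrightarrow> ks a \<le> ks b"
  unfolding ks_def by (simp add: diff_le_mono)

lemma gamma_phase: "ks m \<le> k \<Longrightarrow> k < ks (Suc m) \<Longrightarrow> \<gamma> k = 1 / 2 ^ m"
  unfolding ks_def by (rule step_size_phase)

lemma phase_stays:
  assumes st: "stab (x k) (1 / 2 ^ m)" and k: "ks m \<le> k" and kk: "k \<le> k'"
  shows "k' \<le> ks (Suc m) \<longrightarrow> x k' = x k"
  using kk
proof (induction k' rule: dec_induct)
  case base then show ?case by simp
next
  case (step n)
  show ?case
  proof
    assume n: "Suc n \<le> ks (Suc m)"
    then have xn: "x n = x k" using step by simp
    have "\<gamma> n = 1 / 2 ^ m" using k step n by (intro gamma_phase) auto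
    then have "stab (x n) (\<gamma> n)" using st xn by simp
    then show "x (Suc n) = x k" using stab_nofire xn by simp
  qed
qed

lemma phase_dich: "stab (x (ks (Suc m))) (1 / 2 ^ m) \<or> P (ks m) + 1 \<le> P (ks (Suc m))"
proof (cases "\<exists>k. ks m \<le> k \<and> k < ks (Suc m) \<and> stab (x k) (1 / 2 ^ m)")
  case True
  then obtain k where k: "ks m \<le> k" "k < ks (Suc m)" "stab (x k) (1 / 2 ^ m)" by blast
  then have "x (ks (Suc m)) = x k" using phase_stays[of k m "ks (Suc m)"] by simp
  then show ?thesis using k by simp
next
  case False
  have grow: "t \<le> 2 ^ m \<Longrightarrow> P (ks m) + real t / 2 ^ m \<le> P (ks m + t)" for t
  proof (induction t)
    case 0 then show ?case by simp
  next
    case (Suc t)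
    define k where "k = ks m + t"
    have k1: "ks m \<le> k" and k2: "k < ks (Suc m)" using Suc.prems by (auto simp: k_def ks_Suc)
    have g: "\<gamma> k = 1 / 2 ^ m" using k1 k2 by (rule gamma_phase)
    have "\<not> stab (x k) (\<gamma> k)" using False k1 k2 g by auto
    then have "P (Suc k) \<ge> P k + \<gamma> k" by (rule unstab_grow)
    then have "P (Suc k) \<ge> P k + 1 / 2 ^ m" using g by simp
    moreover have "P (ks m) + real t / 2 ^ m \<le> P k" using Suc by (simp add: k_def)
    ultimately have "P (ks m) + (real t + 1) / 2 ^ m \<le> P (Suc k)" by (simp add: add_divide_distrib)
    then show ?case by (simp add: k_def add.commute)
  qed
  from grow[of "2 ^ m"] have "P (ks m) + 1 \<le> P (ks (Suc m))" by (simp add: ks_Suc)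
  then show ?thesis by simp
qed

definition Dsum :: real where "Dsum = (\<Sum>i\<in>UNIV. dd i)"
definition Iv :: real where "Iv = (\<Sum>i\<in>UNIV. 1 / v i)"
definition A :: real where "A = Dsum * (1 + Vs) * Iv"

lemma Vs_nonneg: "Vs \<ge> 0" unfolding Vs_def by (rule sum_nonneg) (simp add: less_imp_le v_pos)

lemma A_bound: "dd y * (1 + v y) / v l \<le> A"
proof -
  have a: "dd y \<le> Dsum" unfolding Dsum_def by (rule member_le_sum) auto
  have b: "1 + v y \<le> 1 + Vs" unfolding Vs_def using member_le_sum[of y UNIV v] v_pos by (simp add: less_imp_le)
  have c: "1 / v l \<le> Iv" unfolding Iv_def using member_le_sum[of l UNIV "\<lambda>i. 1 / v i"] v_pos by (simp add: less_imp_le)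
  have "dd y * (1 + v y) \<le> Dsum * (1 + Vs)"
    using a b v_pos[of y] by (intro mult_mono) (auto simp: less_imp_le)
  moreover have "0 \<le> Dsum * (1 + Vs)" using a b v_pos[of y] Vs_nonneg by (smt (verit) of_nat_0_le_iff zero_le_mult_iff)
  ultimately have "dd y * (1 + v y) * (1 / v l) \<le> Dsum * (1 + Vs) * Iv"
    using c v_pos[of l] by (rule_tac mult_mono) (auto simp: less_imp_le)
  then show ?thesis by (simp add: A_def)
qed

lemma A_nonneg: "A \<ge> 0"
  using A_bound[of undefined undefined] v_pos
  by (smt (verit, best) divide_nonneg_pos of_nat_0_le_iff zero_le_mult_iff)

lemma edge_step:
  assumes st: "stab (x k) g" and g: "g \<ge> 0" and e: "(l, y) \<in> E"
  shows "x k l / v l - Rmin k \<le> A * (g + (x k y / v y - Rmin k))"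
proof -
  define \<mu> where "\<mu> = Rmin k"
  define ee where "ee j = x k j / v j - \<mu>" for j
  have xj: "x k j = v j * \<mu> + v j * ee j" for j using v_pos[of j] by (simp add: ee_def algebra_simps)
  have ee_nn: "ee j \<ge> 0" for j using Rmin_le[of k j] v_pos[of j] by (simp add: ee_def \<mu>_def pos_le_divide_eq)
  have S1: "(\<Sum>j\<in>in_nbrs E y. x k j) = \<mu> * (dd y * v y) + (\<Sum>j\<in>in_nbrs E y. v j * ee j)"
  proof -
    have "(\<Sum>j\<in>in_nbrs E y. x k j) = (\<Sum>j\<in>in_nbrs E y. v j * \<mu>) + (\<Sum>j\<in>in_nbrs E y. v j * ee j)"
      by (simp add: xj sum.distrib)
    moreover have "(\<Sum>j\<in>in_nbrs E y. v j * \<mu>) = \<mu> * (dd y * v y)"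
      using v_eq[of y] by (simp add: sum_distrib_left[symmetric] mult.commute)
    ultimately show ?thesis by simp
  qed
  have S2: "v l * ee l \<le> (\<Sum>j\<in>in_nbrs E y. v j * ee j)"
    by (rule member_le_sum) (use e ee_nn v_pos in \<open>auto simp: in_out less_imp_le\<close>)
  have S3: "dd y * x k y = dd y * v y * \<mu> + dd y * v y * ee y" by (simp add: xj algebra_simps)
  have "bal E (x k) y < dd y * g" using st unfolding stab_def by blast
  then have "v l * ee l < dd y * g + dd y * v y * ee y"
    using S1 S2 S3 unfolding bal_def by (simp add: algebra_simps)
  also have "\<dots> \<le> dd y * (1 + v y) * (g + ee y)"
    using g ee_nn[of y] v_pos[of y] by (simp add: algebra_simps)
  finally have "ee l < (dd y * (1 + v y) / v l) * (g + ee y)"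
    using v_pos[of l] by (simp add: pos_less_divide_eq mult.commute)
  also have "\<dots> \<le> A * (g + ee y)"
    using A_bound[of y l] g ee_nn[of y] by (intro mult_right_mono) auto
  finally show ?thesis by (simp add: ee_def \<mu>_def)
qed

lemma path_bound:
  assumes st: "stab (x k) g" and g: "g \<ge> 0" and m: "x k m = Rmin k * v m"
  shows "(l, m) \<in> E ^^ n \<Longrightarrow> x k l / v l - Rmin k \<le> (A + 1) ^ Suc n * g"
proof (induction n arbitrary: l)
  case 0
  then have "l = m" by simp
  then have "x k l / v l - Rmin k = 0" using m v_pos[of m] by simp
  moreover have "(A + 1) ^ Suc 0 * g \<ge> 0" using A_nonneg g by simp
  ultimately show ?case by linarith
next
  case (Suc n)
  then obtain y where ly: "(l, y) \<in> E" and ym: "(y, m) \<in> E ^^ n" by (meson relpow_Suc_E2)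
  have IH: "x k y / v y - Rmin k \<le> (A + 1) ^ Suc n * g" using Suc.IH ym by blast
  have "x k l / v l - Rmin k \<le> A * (g + (x k y / v y - Rmin k))" by (rule edge_step[OF st g ly])
  also have "\<dots> \<le> A * (g + (A + 1) ^ Suc n * g)"
    using IH A_nonneg by (intro mult_left_mono) auto
  also have "\<dots> = A * g + A * ((A + 1) ^ Suc n * g)" by (simp add: algebra_simps)
  also have "\<dots> \<le> (A + 1) ^ Suc n * g + A * ((A + 1) ^ Suc n * g)"
  proof -
    have "(1::real) \<le> (A + 1) ^ n" using A_nonneg by (intro one_le_power) auto
    then have "A + 1 \<le> (A + 1) ^ Suc n" using A_nonneg
      by (metis mult.right_neutral mult_left_mono power_Suc add_nonneg_nonneg zero_le_one)
    then have "A \<le> (A + 1) ^ Suc n" by linarith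
    then show ?thesis using g by (simp add: mult_right_mono)
  qed
  also have "\<dots> = (A + 1) ^ Suc (Suc n) * g" by (simp add: algebra_simps)
  finally show ?case .
qed

definition pl :: "'v \<Rightarrow> 'v \<Rightarrow> nat" where "pl l m = (SOME n. (l, m) \<in> E ^^ n)"

lemma pl: "(l, m) \<in> E ^^ pl l m"
proof -
  have "(l, m) \<in> E\<^sup>*"
  proof (cases "l = m")
    case True then show ?thesis by simp
  next
    case False then show ?thesis using sc unfolding strongly_connected_def by (simp add: trancl_into_rtrancl)
  qed
  then have "\<exists>n. (l, m) \<in> E ^^ n" by (simp add: rtrancl_power)
  then show ?thesis unfolding pl_def by (rule someI_ex)
qed

definition C0 :: real where "C0 = (\<Sum>p\<in>UNIV. (A + 1) ^ Suc (pl (fst p) (snd p)))"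

lemma C0_nonneg: "C0 \<ge> 0" unfolding C0_def using A_nonneg by (intro sum_nonneg) simp

lemma spread:
  assumes st: "stab (x k) g" and g: "g \<ge> 0"
  shows "Rmax k - Rmin k \<le> C0 * g"
proof -
  obtain m where m: "x k m = Rmin k * v m" using Rmin_attained by blast
  obtain l where l: "x k l = Rmax k * v l" using Rmax_attained by blast
  have "Rmax k - Rmin k = x k l / v l - Rmin k" using l v_pos[of l] by simp
  also have "\<dots> \<le> (A + 1) ^ Suc (pl l m) * g" by (rule path_bound[OF st g m pl])
  also have "\<dots> \<le> C0 * g"
  proof (rule mult_right_mono[OF _ g])
    show "(A + 1) ^ Suc (pl l m) \<le> C0" unfolding C0_def
      using member_le_sum[of "(l, m)" UNIV "\<lambda>p. (A + 1) ^ Suc (pl (fst p) (snd p))"] A_nonneg by simp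
  qed
  finally show ?thesis .
qed

lemma bal_bound: "\<bar>bal E (x k) i\<bar> \<le> dd i * v i * (Rmax k - Rmin k)"
proof -
  have u: "(\<Sum>j\<in>in_nbrs E i. x k j) \<le> Rmax k * (dd i * v i)"
    using sum_mono[of "in_nbrs E i" "x k" "\<lambda>j. Rmax k * v j"] Rmax_ge
    by (simp add: sum_distrib_left[symmetric] v_eq)
  have l: "(\<Sum>j\<in>in_nbrs E i. x k j) \<ge> Rmin k * (dd i * v i)"
    using sum_mono[of "in_nbrs E i" "\<lambda>j. Rmin k * v j" "x k"] Rmin_le
    by (simp add: sum_distrib_left[symmetric] v_eq)
  have a: "dd i * x k i \<le> dd i * (Rmax k * v i)" by (rule mult_left_mono[OF Rmax_ge]) simp
  have b: "dd i * (Rmin k * v i) \<le> dd i * x k i" by (rule mult_left_mono[OF Rmin_le]) simp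
  show ?thesis using u l a b unfolding bal_def by (simp add: abs_le_iff algebra_simps)
qed

end


context wb begin

lemma exists_stable_phase: "\<exists>m\<ge>m1. stab (x (ks (Suc m))) (1 / 2 ^ m)"
proof (rule ccontr)
  assume "\<not> ?thesis"
  then have ns: "\<And>m. m \<ge> m1 \<Longrightarrow> \<not> stab (x (ks (Suc m))) (1 / 2 ^ m)" by blast
  have grow: "P (ks (m1 + t)) \<ge> real t" for t
  proof (induction t)
    case 0 then show ?case using P_nonneg by simp
  next
    case (Suc t)
    have "P (ks (m1 + t)) + 1 \<le> P (ks (Suc (m1 + t)))" using phase_dich[of "m1 + t"] ns[of "m1 + t"] by auto
    then show ?case using Suc by simp
  qed
  obtain t where t: "Rmax 0 * Vs < real t" using reals_Archimedean2 by blast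
  show False using grow[of t] P_bound[of "ks (m1 + t)"] t by linarith
qed

lemma spread_diff:
  assumes "k \<le> k'"
  shows "x k' i - x k i \<le> (Rmax k - Rmin k) * v i"
proof -
  have "x k' i \<le> Rmax k * v i"
    using Rmax_ge[of k' i] Rmax_mono[OF assms] v_pos[of i] by (meson mult_right_mono less_imp_le order_trans)
  moreover have "Rmin k * v i \<le> x k i" by (rule Rmin_le)
  ultimately show ?thesis by (simp add: algebra_simps)
qed

lemma propagate:
  assumes st: "stab (x (ks (Suc m))) (1 / 2 ^ m)" and big: "Vs * C0 < 2 ^ m"
  shows "stab (x (ks (Suc (Suc m)))) (1 / 2 ^ Suc m)"
proof (rule ccontr)
  assume "\<not> ?thesis"
  then have grow: "P (ks (Suc m)) + 1 \<le> P (ks (Suc (Suc m)))" using phase_dich[of "Suc m"] by auto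
  define ke where "ke = ks (Suc m)"
  define kf where "kf = ks (Suc (Suc m))"
  have kk: "ke \<le> kf" unfolding ke_def kf_def by (rule ks_mono) simp
  have sp: "Rmax ke - Rmin ke \<le> C0 * (1 / 2 ^ m)" unfolding ke_def by (rule spread[OF st]) simp
  have "P kf - P ke = (\<Sum>i\<in>UNIV. x kf i - x ke i)" unfolding P_def by (simp add: sum_subtractf)
  also have "\<dots> \<le> (\<Sum>i\<in>UNIV. (Rmax ke - Rmin ke) * v i)" by (rule sum_mono) (rule spread_diff[OF kk])
  also have "\<dots> = (Rmax ke - Rmin ke) * Vs" unfolding Vs_def by (simp add: sum_distrib_left)
  also have "\<dots> \<le> C0 * (1 / 2 ^ m) * Vs" using sp Vs_nonneg by (rule mult_right_mono)
  also have "\<dots> < 1" using big by (simp add: field_simps)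
  finally show False using grow unfolding ke_def kf_def by linarith
qed

lemma rate: "\<exists>K c. \<forall>k\<ge>K. (\<Sum>i\<in>UNIV. \<bar>bal E (x k) i\<bar>) \<le> c / real k"
proof -
  obtain m0 where m0: "Vs * C0 < 2 ^ m0" using real_arch_pow[of 2 "Vs * C0"] by auto
  obtain ms where ms: "ms \<ge> m0" "stab (x (ks (Suc ms))) (1 / 2 ^ ms)" using exists_stable_phase by blast
  have allst: "stab (x (ks (Suc n))) (1 / 2 ^ n)" if "ms \<le> n" for n
    using that
  proof (induction n rule: dec_induct)
    case base then show ?case using ms by simp
  next
    case (step n)
    have "(2::real) ^ m0 \<le> 2 ^ n" using ms step by (intro power_increasing) auto
    then have "Vs * C0 < 2 ^ n" using m0 by linarith
    then show ?case using propagate[OF step(3)] by blast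
  qed
  define W where "W = (\<Sum>i\<in>UNIV. dd i * v i)"
  have W: "W \<ge> 0" unfolding W_def using v_pos by (intro sum_nonneg) (simp add: less_imp_le)
  show ?thesis
  proof (intro exI allI impI)
    fix k assume kK: "ks (Suc ms) \<le> k"
    obtain m' where m': "2 ^ m' - 1 \<le> k" "k < 2 ^ Suc m' - (1::nat)" using phase_exists by blast
    then have m'k: "ks m' \<le> k" "k < ks (Suc m')" unfolding ks_def by auto
    have "\<not> m' \<le> ms"
    proof
      assume "m' \<le> ms"
      then have "ks (Suc m') \<le> ks (Suc ms)" by (intro ks_mono) simp
      then show False using m'k kK by linarith
    qed
    then obtain n where n: "m' = Suc n" "ms \<le> n" by (cases m') auto
    have "(1::nat) \<le> 2 ^ ms" by simp
    then have kpos: "k > 0" using kK ks_Suc[of ms] by linarith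
    have sp0: "Rmax (ks (Suc n)) - Rmin (ks (Suc n)) \<le> C0 * (1 / 2 ^ n)"
      by (rule spread[OF allst[OF n(2)]]) simp
    have "Rmax k - Rmin k \<le> Rmax (ks (Suc n)) - Rmin (ks (Suc n))"
      using Rmax_mono[of "ks (Suc n)" k] Rmin_mono[of "ks (Suc n)" k] m'k n by simp
    also have "\<dots> \<le> C0 * (1 / 2 ^ n)" by (rule sp0)
    also have "\<dots> \<le> C0 * (4 / real k)"
    proof (rule mult_left_mono[OF _ C0_nonneg])
      have "k < 2 ^ Suc (Suc n)" using m'k n unfolding ks_def by simp
      then have "k < 4 * 2 ^ n" by simp
      then have "real k < real (4 * 2 ^ n)" by (simp only: of_nat_less_iff)
      then have "real k < 4 * 2 ^ n" by simp
      then show "1 / 2 ^ n \<le> 4 / real k" using kpos by (simp add: field_simps)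
    qed
    finally have spk: "Rmax k - Rmin k \<le> C0 * (4 / real k)" .
    have "(\<Sum>i\<in>UNIV. \<bar>bal E (x k) i\<bar>) \<le> (\<Sum>i\<in>UNIV. dd i * v i * (Rmax k - Rmin k))"
      by (rule sum_mono) (rule bal_bound)
    also have "\<dots> = W * (Rmax k - Rmin k)" unfolding W_def by (simp add: sum_distrib_right)
    also have "\<dots> \<le> W * (C0 * (4 / real k))" using spk W by (rule mult_left_mono)
    also have "\<dots> = (W * C0 * 4) / real k" by simp
    finally show "(\<Sum>i\<in>UNIV. \<bar>bal E (x k) i\<bar>) \<le> (W * C0 * 4) / real k" .
  qed
qed

end


context wb begin

lemma main:
  "(\<exists>Ainf :: 'v \<Rightarrow> 'v \<Rightarrow> real.
            (\<forall>i j. (\<lambda>k. alg E k i j) \<longlonglongrightarrow> Ainf i j) \<and> weight_balanced E Ainf)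
       \<and> imbalance_norm1 E \<in> O(\<lambda>k. 1 / real k)"
proof -
  obtain K c where rt: "\<And>k. k \<ge> K \<Longrightarrow> (\<Sum>i\<in>UNIV. \<bar>bal E (x k) i\<bar>) \<le> c / real k"
    using rate by blast
  have imb: "imbalance_norm1 E k = (\<Sum>i\<in>UNIV. \<bar>bal E (x k) i\<bar>)" for k
    unfolding imbalance_norm1_def by (simp add: balance_alg)
  have bigO: "imbalance_norm1 E \<in> O(\<lambda>k. 1 / real k)"
  proof (rule bigoI[of _ c])
    show "\<forall>\<^sub>F k in at_top. norm (imbalance_norm1 E k) \<le> c * norm (1 / real k)"
      unfolding eventually_at_top_linorder
    proof (intro exI allI impI)
      fix k assume "k \<ge> K"
      then have "(\<Sum>i\<in>UNIV. \<bar>bal E (x k) i\<bar>) \<le> c / real k" by (rule rt)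
      moreover have "(\<Sum>i\<in>UNIV. \<bar>bal E (x k) i\<bar>) \<ge> 0" by (simp add: sum_nonneg)
      ultimately show "norm (imbalance_norm1 E k) \<le> c * norm (1 / real k)"
        by (simp add: imb)
    qed
  qed
  define L where "L j = (SUP k. x k j)" for j
  have conv: "(\<lambda>k. x k j) \<longlonglongrightarrow> L j" for j
    unfolding L_def
  proof (rule LIMSEQ_incseq_SUP)
    show "bdd_above (range (\<lambda>k. x k j))" by (rule bdd_aboveI2) (rule x_bound)
    show "incseq (\<lambda>k. x k j)" by (rule incseq_SucI) (rule x_Suc_ge)
  qed
  define Ainf where "Ainf i j = (if j \<in> in_nbrs E i then L j else 0)" for i j
  have c1: "(\<lambda>k. alg E k i j) \<longlonglongrightarrow> Ainf i j" for i j
    by (cases "j \<in> in_nbrs E i") (simp_all add: alg_eq Ainf_def conv)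
  have balL: "bal E L i = 0" for i
  proof -
    have t1: "(\<lambda>k. bal E (x k) i) \<longlonglongrightarrow> bal E L i"
      unfolding bal_def by (intro tendsto_intros conv)
    have t2: "(\<lambda>k. bal E (x k) i) \<longlonglongrightarrow> 0"
    proof (rule Lim_null_comparison)
      show "\<forall>\<^sub>F k in sequentially. norm (bal E (x k) i) \<le> c / real k"
        unfolding eventually_sequentially
      proof (intro exI allI impI)
        fix k assume "k \<ge> K"
        have "\<bar>bal E (x k) i\<bar> \<le> (\<Sum>i\<in>UNIV. \<bar>bal E (x k) i\<bar>)"
          by (rule member_le_sum) auto
        then show "norm (bal E (x k) i) \<le> c / real k" using rt[OF \<open>k \<ge> K\<close>] by simp
      qed
      show "(\<lambda>k. c / real k) \<longlonglongrightarrow> 0" by (rule lim_const_over_n)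
    qed
    show ?thesis using t1 t2 by (rule LIMSEQ_unique)
  qed
  have wbal: "weight_balanced E Ainf"
    unfolding weight_balanced_def
  proof
    fix i
    have "balance E Ainf i = bal E L i" by (rule balance_form) (simp add: Ainf_def)
    then show "(\<Sum>j\<in>in_nbrs E i. Ainf i j) = (\<Sum>j\<in>out_nbrs E i. Ainf j i)"
      using balL[of i] unfolding balance_def by simp
  qed
  show ?thesis using c1 wbal bigO by blast
qed

end

theorem theorem1:
  fixes E :: "('v::finite \<times> 'v) set"
  assumes "no_self_loops E"
    and "strongly_connected E"
  shows "(\<exists>Ainf :: 'v \<Rightarrow> 'v \<Rightarrow> real.
            (\<forall>i j. (\<lambda>k. alg E k i j) \<longlonglongrightarrow> Ainf i j) \<and> weight_balanced E Ainf)
       \<and> imbalance_norm1 E \<in> O(\<lambda>k. 1 / real k)"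
proof (cases "E = {}")
  case False
  interpret wb E using assms False by unfold_locales
  show ?thesis by (rule main)
next
  case True
  have a0: "alg E k i j = 0" for k i j using True by (simp add: alg_eq in_nbrs_def)
  have wbal: "weight_balanced E (\<lambda>i j. 0)" using True
    by (simp add: weight_balanced_def in_nbrs_def out_nbrs_def)
  have imb: "imbalance_norm1 E k = 0" for k
    using True by (simp add: imbalance_norm1_def balance_def in_nbrs_def out_nbrs_def)
  have "imbalance_norm1 E \<in> O(\<lambda>k. 1 / real k)"
    by (rule bigoI[of _ 0]) (simp add: imb)
  then show ?thesis using a0 wbal by auto
qed


end
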